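(* Let $\Omega\subset\mathbb{R}^N$ be a smooth open bounded domain, let $a,b,c\in L^\infty(\Omega)$ with $\operatorname{ess\,inf}_\Omega a>0$, $\operatorname{ess\,inf}_\Omega b>0$, $\operatorname{ess\,inf}_\Omega c>0$, and let $F\in C^1(\mathbb{R}^2,\mathbb{R})$ satisfy: (F$_+$) $F(s,t)\ge 0$ for all $(s,t)\in\mathbb{R}^2$, $F(0,0)=0$, and $F\not\equiv 0$; (F$_0$) $\lim_{(s,t)\to(0,0)}\frac{F_s(s,t)}{|s|+|t|}=\lim_{(s,t)\to(0,0)}\frac{F_t(s,t)}{|s|+|t|}=0$; (F$_\infty$) $\lim_{|s|+|t|\to\infty}\frac{F_s(s,t)}{|s|+|t|}=\lim_{|s|+|t|\to\infty}\frac{F_t(s,t)}{|s|+|t|}=0$. Define $$s_F=2\|c\|_{L^1}\sup_{(s,t)\neq(0,0)}\frac{F(s,t)}{\|a\|_{L^1}s^2+\|b\|_{L^1}t^2},\qquad S_F=\sup_{(s,t)\neq(0,0)}\frac{|sF_s(s,t)+tF_t(s,t)|}{\|c/a\|_{L^\infty}^{-1}s^2+\|c/b\|_{L^\infty}^{-1}t^2}.$$ Then $s_F$ and $S_F$ are finite and positive, and $S_F\ge s_F$.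
   Context: $F_s,F_t$ denote the partial derivatives of $F$ with respect to its first and second variables; $\|\cdot\|_{L^p}$ is the norm of $L^p(\Omega)$. *)

theory Defs
  imports "HOL-Analysis.Analysis" "HOL-Probability.Essential_Supremum"
begin

definition essinf_on :: "'a::euclidean_space set \<Rightarrow> ('a \<Rightarrow> real) \<Rightarrow> ereal" where
  "essinf_on \<Omega> f = - esssup (restrict_space lebesgue \<Omega>) (\<lambda>x. ereal (- f x))"

definition in_Linf :: "'a::euclidean_space set \<Rightarrow> ('a \<Rightarrow> real) \<Rightarrow> bool" where
  "in_Linf \<Omega> f \<longleftrightarrow> f \<in> borel_measurable (restrict_space lebesgue \<Omega>) \<and>
     esssup (restrict_space lebesgue \<Omega>) (\<lambda>x. ereal \<bar>f x\<bar>) < \<infinity>"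

definition Linf_norm :: "'a::euclidean_space set \<Rightarrow> ('a \<Rightarrow> real) \<Rightarrow> real" where
  "Linf_norm \<Omega> f = real_of_ereal (esssup (restrict_space lebesgue \<Omega>) (\<lambda>x. ereal \<bar>f x\<bar>))"

definition L1_norm :: "'a::euclidean_space set \<Rightarrow> ('a \<Rightarrow> real) \<Rightarrow> real" where
  "L1_norm \<Omega> f = (LINT x:\<Omega>|lebesgue. \<bar>f x\<bar>)"

text \<open>The quantities s_F and S_F (as extended reals, so that finiteness is meaningful).\<close>
definition sF :: "'a::euclidean_space set \<Rightarrow> ('a \<Rightarrow> real) \<Rightarrow> ('a \<Rightarrow> real) \<Rightarrow> ('a \<Rightarrow> real)
    \<Rightarrow> (real \<Rightarrow> real \<Rightarrow> real) \<Rightarrow> ereal" where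
  "sF \<Omega> a b c F = 2 * ereal (L1_norm \<Omega> c) *
     (SUP p \<in> UNIV - {(0,0)}. ereal (F (fst p) (snd p) /
        (L1_norm \<Omega> a * (fst p)\<^sup>2 + L1_norm \<Omega> b * (snd p)\<^sup>2)))"

definition SF :: "'a::euclidean_space set \<Rightarrow> ('a \<Rightarrow> real) \<Rightarrow> ('a \<Rightarrow> real) \<Rightarrow> ('a \<Rightarrow> real)
    \<Rightarrow> (real \<Rightarrow> real \<Rightarrow> real) \<Rightarrow> (real \<Rightarrow> real \<Rightarrow> real) \<Rightarrow> ereal" where
  "SF \<Omega> a b c Fs Ft =
     (SUP p \<in> UNIV - {(0,0)}. ereal (\<bar>fst p * Fs (fst p) (snd p) + snd p * Ft (fst p) (snd p)\<bar> /
        (inverse (Linf_norm \<Omega> (\<lambda>x. c x / a x)) * (fst p)\<^sup>2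
         + inverse (Linf_norm \<Omega> (\<lambda>x. c x / b x)) * (snd p)\<^sup>2)))"

end

theory Submission
  imports Defs
begin

lemma meas_basic:
  fixes \<Omega> :: "'a::euclidean_space set"
  assumes "open \<Omega>" "bounded \<Omega>" "\<Omega> \<noteq> {}"
  shows "\<Omega> \<in> sets lebesgue"
    and "space (restrict_space lebesgue \<Omega>) = \<Omega>"
    and "finite_measure (restrict_space lebesgue \<Omega>)"
    and "emeasure (restrict_space lebesgue \<Omega>) \<Omega> \<noteq> 0"
proof -
  show S: "\<Omega> \<in> sets lebesgue" using assms(1) by simp
  show sp: "space (restrict_space lebesgue \<Omega>) = \<Omega>" by (simp add: space_restrict_space)
  have e: "emeasure (restrict_space lebesgue \<Omega>) \<Omega> = emeasure lborel \<Omega>"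
    using S assms(1) by (simp add: emeasure_restrict_space)
  show "finite_measure (restrict_space lebesgue \<Omega>)"
    by (rule finite_measureI) (use e sp emeasure_bounded_finite[OF assms(2)] in simp)
  obtain x where x: "x \<in> \<Omega>" using assms(3) by blast
  then obtain r where r: "r > 0" "ball x r \<subseteq> \<Omega>" using assms(1) open_contains_ball by blast
  have "emeasure lborel (ball x r) \<le> emeasure lborel \<Omega>"
    by (rule emeasure_mono) (use r assms(1) in simp_all)
  moreover have "emeasure lborel (ball x r) > 0"
    using r by (simp add: emeasure_ball)
  ultimately show "emeasure (restrict_space lebesgue \<Omega>) \<Omega> \<noteq> 0" using e by simp
qed

lemma lower_bound:
  assumes "essinf_on \<Omega> a > 0"
  shows "\<exists>m>0. AE x in restrict_space lebesgue \<Omega>. a x \<ge> m"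
proof -
  let ?M = "restrict_space lebesgue \<Omega>"
  have "- esssup ?M (\<lambda>x. ereal (- a x)) > 0" using assms unfolding essinf_on_def .
  then have "esssup ?M (\<lambda>x. ereal (- a x)) < 0"
    by (cases "esssup ?M (\<lambda>x. ereal (- a x))") auto
  from ereal_dense2[OF this] obtain r where r: "esssup ?M (\<lambda>x. ereal (- a x)) < ereal r" "ereal r < 0"
    by blast
  have "AE x in ?M. ereal (- a x) \<le> esssup ?M (\<lambda>x. ereal (- a x))" by (rule esssup_AE)
  then have "AE x in ?M. a x \<ge> - r"
  proof (rule AE_mp, intro AE_I2 impI)
    fix x assume "ereal (- a x) \<le> esssup ?M (\<lambda>x. ereal (- a x))"
    then have "ereal (- a x) < ereal r" using r(1) by (rule le_less_trans)
    then show "a x \<ge> - r" by simp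
  qed
  moreover have "- r > 0" using r(2) by simp
  ultimately show ?thesis by blast
qed


lemma upper_bound:
  assumes "in_Linf \<Omega> a"
  shows "\<exists>K. AE x in restrict_space lebesgue \<Omega>. \<bar>a x\<bar> \<le> K"
proof -
  let ?M = "restrict_space lebesgue \<Omega>"
  have "esssup ?M (\<lambda>x. ereal \<bar>a x\<bar>) < \<infinity>" using assms unfolding in_Linf_def by blast
  from ereal_dense2[OF this] obtain r where r: "esssup ?M (\<lambda>x. ereal \<bar>a x\<bar>) < ereal r"
    by blast
  have "AE x in ?M. ereal \<bar>a x\<bar> \<le> esssup ?M (\<lambda>x. ereal \<bar>a x\<bar>)" by (rule esssup_AE)
  then have "AE x in ?M. \<bar>a x\<bar> \<le> r"
  proof (rule AE_mp, intro AE_I2 impI)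
    fix x assume "ereal \<bar>a x\<bar> \<le> esssup ?M (\<lambda>x. ereal \<bar>a x\<bar>)"
    then have "ereal \<bar>a x\<bar> < ereal r" using r by (rule le_less_trans)
    then show "\<bar>a x\<bar> \<le> r" by simp
  qed
  then show ?thesis by blast
qed

lemma L1_norm_restrict:
  assumes "\<Omega> \<in> sets lebesgue"
  shows "L1_norm \<Omega> f = integral\<^sup>L (restrict_space lebesgue \<Omega>) (\<lambda>x. \<bar>f x\<bar>)"
  unfolding L1_norm_def set_lebesgue_integral_def
  by (subst integral_restrict_space) (use assms in simp_all)

lemma AE_False_imp:
  fixes \<Omega> :: "'a::euclidean_space set"
  assumes "open \<Omega>" "bounded \<Omega>" "\<Omega> \<noteq> {}"
    and "AE x in restrict_space lebesgue \<Omega>. False"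
  shows False
proof -
  have "ae_filter (restrict_space lebesgue \<Omega>) = bot"
    using assms(4) by (simp add: eventually_False)
  then have "emeasure (restrict_space lebesgue \<Omega>) (space (restrict_space lebesgue \<Omega>)) = 0"
    by (simp add: ae_filter_eq_bot_iff)
  then show False using meas_basic[OF assms(1-3)] by simp
qed

lemma integrable_abs:
  fixes \<Omega> :: "'a::euclidean_space set"
  assumes "open \<Omega>" "bounded \<Omega>" "\<Omega> \<noteq> {}" "in_Linf \<Omega> f"
  shows "integrable (restrict_space lebesgue \<Omega>) (\<lambda>x. \<bar>f x\<bar>)"
proof -
  interpret finite_measure "restrict_space lebesgue \<Omega>" using meas_basic[OF assms(1-3)] by simp
  obtain K where K: "AE x in restrict_space lebesgue \<Omega>. \<bar>f x\<bar> \<le> K"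
    using upper_bound[OF assms(4)] by blast
  have m: "f \<in> borel_measurable (restrict_space lebesgue \<Omega>)" using assms(4) unfolding in_Linf_def by blast
  show ?thesis
    by (rule integrable_const_bound[where B=K]) (use K m in simp_all)
qed

lemma L1_pos:
  fixes \<Omega> :: "'a::euclidean_space set"
  assumes "open \<Omega>" "bounded \<Omega>" "\<Omega> \<noteq> {}" "in_Linf \<Omega> f" "essinf_on \<Omega> f > 0"
  shows "L1_norm \<Omega> f > 0"
proof -
  let ?M = "restrict_space lebesgue \<Omega>"
  have S: "\<Omega> \<in> sets lebesgue" using meas_basic[OF assms(1-3)] by simp
  have I: "integrable ?M (\<lambda>x. \<bar>f x\<bar>)" by (rule integrable_abs[OF assms(1-4)])
  obtain m where m: "m > 0" "AE x in ?M. f x \<ge> m" using lower_bound[OF assms(5)] by blast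
  have ge: "integral\<^sup>L ?M (\<lambda>x. \<bar>f x\<bar>) \<ge> 0" by (rule integral_nonneg_AE) simp
  have "integral\<^sup>L ?M (\<lambda>x. \<bar>f x\<bar>) \<noteq> 0"
  proof
    assume "integral\<^sup>L ?M (\<lambda>x. \<bar>f x\<bar>) = 0"
    then have "AE x in ?M. \<bar>f x\<bar> = 0" using integral_nonneg_eq_0_iff_AE[OF I] by simp
    then have "AE x in ?M. False" using m(2) by eventually_elim (use m(1) in simp)
    then show False by (rule AE_False_imp[OF assms(1-3)])
  qed
  then have "integral\<^sup>L ?M (\<lambda>x. \<bar>f x\<bar>) > 0" using ge by linarith
  then show ?thesis using L1_norm_restrict[OF S, of f] by simp
qed

lemma ratio_bound:
  fixes \<Omega> :: "'a::euclidean_space set"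
  assumes "open \<Omega>" "bounded \<Omega>" "\<Omega> \<noteq> {}" "in_Linf \<Omega> a" "in_Linf \<Omega> c"
    "essinf_on \<Omega> a > 0" "essinf_on \<Omega> c > 0"
  shows "L1_norm \<Omega> c \<le> Linf_norm \<Omega> (\<lambda>x. c x / a x) * L1_norm \<Omega> a"
    and "Linf_norm \<Omega> (\<lambda>x. c x / a x) > 0"
proof -
  let ?M = "restrict_space lebesgue \<Omega>"
  let ?e = "esssup ?M (\<lambda>x. ereal \<bar>c x / a x\<bar>)"
  have S: "\<Omega> \<in> sets lebesgue" using meas_basic[OF assms(1-3)] by simp
  have ma[measurable]: "a \<in> borel_measurable ?M" using assms(4) unfolding in_Linf_def by blast
  have mc[measurable]: "c \<in> borel_measurable ?M" using assms(5) unfolding in_Linf_def by blast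
  obtain m where m: "m > 0" "AE x in ?M. a x \<ge> m" using lower_bound[OF assms(6)] by blast
  obtain K where K: "AE x in ?M. \<bar>c x\<bar> \<le> K" using upper_bound[OF assms(5)] by blast
  have "AE x in ?M. ereal \<bar>c x / a x\<bar> \<le> ereal (K / m)" using m(2) K
  proof eventually_elim
    case (elim x)
    then have "a x > 0" using m(1) by simp
    then have "\<bar>c x / a x\<bar> = \<bar>c x\<bar> / a x" by simp
    also have "\<dots> \<le> K / a x" using elim \<open>a x > 0\<close> by (simp add: divide_right_mono)
    also have "\<dots> \<le> K / m" using elim \<open>a x > 0\<close> m(1)
      by (smt (verit) frac_le abs_ge_zero)
    finally show ?case by simp
  qed
  then have up: "?e \<le> ereal (K / m)" by (intro esssup_I) simp_all
  have AEe: "AE x in ?M. ereal \<bar>c x / a x\<bar> \<le> ?e" by (rule esssup_AE)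
  have "?e \<noteq> - \<infinity>"
  proof
    assume "?e = - \<infinity>"
    then have "AE x in ?M. False" using AEe by simp
    then show False by (rule AE_False_imp[OF assms(1-3)])
  qed
  then obtain \<alpha> where \<alpha>: "?e = ereal \<alpha>" using up by (cases ?e) auto
  have al: "Linf_norm \<Omega> (\<lambda>x. c x / a x) = \<alpha>" unfolding Linf_norm_def using \<alpha> by simp
  have "AE x in ?M. \<bar>c x\<bar> \<le> \<alpha> * \<bar>a x\<bar>" using AEe m(2)
  proof eventually_elim
    case (elim x)
    then have "a x > 0" using m(1) by simp
    have "\<bar>c x / a x\<bar> \<le> \<alpha>" using elim(1) \<alpha> by simp
    then show ?case using \<open>a x > 0\<close> by (simp add: abs_divide pos_divide_le_eq)
  qed
  then have "integral\<^sup>L ?M (\<lambda>x. \<bar>c x\<bar>) \<le> integral\<^sup>L ?M (\<lambda>x. \<alpha> * \<bar>a x\<bar>)"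
    by (intro integral_mono_AE integrable_abs[OF assms(1-3,5)] integrable_mult_right
        integrable_abs[OF assms(1-3,4)])
  also have "\<dots> = \<alpha> * integral\<^sup>L ?M (\<lambda>x. \<bar>a x\<bar>)" by simp
  finally show 1: "L1_norm \<Omega> c \<le> Linf_norm \<Omega> (\<lambda>x. c x / a x) * L1_norm \<Omega> a"
    using al L1_norm_restrict[OF S, of c] L1_norm_restrict[OF S, of a] by simp
  have "L1_norm \<Omega> c > 0" by (rule L1_pos[OF assms(1-3,5,7)])
  moreover have "L1_norm \<Omega> a > 0" by (rule L1_pos[OF assms(1-3,4,6)])
  ultimately show "Linf_norm \<Omega> (\<lambda>x. c x / a x) > 0" using 1
    by (metis less_le_trans mult_nonpos_nonneg not_less order.strict_implies_order)
qed

lemma growth: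
  fixes G :: "real \<times> real \<Rightarrow> real"
  assumes cont: "continuous_on UNIV G"
    and l0: "((\<lambda>p. G p / (\<bar>fst p\<bar> + \<bar>snd p\<bar>)) \<longlongrightarrow> 0) (at (0, 0))"
    and li: "((\<lambda>p. G p / (\<bar>fst p\<bar> + \<bar>snd p\<bar>)) \<longlongrightarrow> 0)
           (filtercomap (\<lambda>p. \<bar>fst p\<bar> + \<bar>snd p\<bar>) at_top)"
  shows "\<exists>K\<ge>0. \<forall>p. p \<noteq> (0,0) \<longrightarrow> \<bar>G p\<bar> \<le> K * (\<bar>fst p\<bar> + \<bar>snd p\<bar>)"
proof -
  define n where "n = (\<lambda>p::real\<times>real. \<bar>fst p\<bar> + \<bar>snd p\<bar>)"
  have nn: "norm p \<le> n p" for p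
    unfolding n_def by (cases p) (simp add: norm_Pair sqrt_sum_squares_le_sum_abs)
  have "eventually (\<lambda>p. dist (G p / n p) 0 < 1) (at (0,0))"
    using tendstoD[OF l0, of 1] unfolding n_def by simp
  then obtain d where d: "d > 0" "\<And>p. p \<noteq> (0,0) \<Longrightarrow> dist p (0,0) < d \<Longrightarrow> \<bar>G p / n p\<bar> < 1"
    unfolding eventually_at by auto
  have "eventually (\<lambda>p. dist (G p / n p) 0 < 1) (filtercomap n at_top)"
    using tendstoD[OF li, of 1] unfolding n_def by simp
  then obtain R where R: "\<And>p. n p \<ge> R \<Longrightarrow> \<bar>G p / n p\<bar> < 1"
    unfolding eventually_filtercomap_at_top_linorder by auto
  obtain B where B: "B \<ge> 0" "\<And>x. x \<in> cball 0 R \<Longrightarrow> norm (G x) \<le> B"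
    using continuous_on_compact_bound[OF compact_cball continuous_on_subset[OF cont]] by blast
  define K where "K = max 1 (B / d)"
  have "\<forall>p. p \<noteq> (0,0) \<longrightarrow> \<bar>G p\<bar> \<le> K * n p"
  proof (intro allI impI)
    fix p :: "real \<times> real" assume p: "p \<noteq> (0,0)"
    have dp: "dist p (0,0) = norm p" by (metis dist_0_norm dist_commute zero_prod_def)
    have np: "norm p > 0" using p by (simp add: zero_prod_def)
    then have npos: "n p > 0" using nn[of p] by linarith
    have "\<bar>G p / n p\<bar> \<le> K"
    proof (cases "dist p (0,0) < d")
      case True then show ?thesis using d(2)[OF p] unfolding K_def by fastforce
    next
      case F: False
      show ?thesis
      proof (cases "n p \<ge> R")
        case True then show ?thesis using R unfolding K_def by fastforce
      next
        case False
        then have "p \<in> cball 0 R" using nn[of p] by (simp add: dist_norm)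
        then have "\<bar>G p\<bar> \<le> B" using B(2) by simp
        moreover have "d \<le> n p" using F nn[of p] using dp by linarith
        ultimately have "\<bar>G p\<bar> / n p \<le> B / d"
          using d(1) npos B(1) by (meson frac_le abs_ge_zero)
        then show ?thesis using npos unfolding K_def by (simp add: abs_divide)
      qed
    qed
    then show "\<bar>G p\<bar> \<le> K * n p" using npos by (simp add: abs_divide pos_divide_le_eq)
  qed
  moreover have "K \<ge> 0" unfolding K_def by simp
  ultimately show ?thesis unfolding n_def by blast
qed

lemma ray:
  fixes F Fs Ft :: "real \<Rightarrow> real \<Rightarrow> real"
  assumes F_deriv: "\<And>s t. ((\<lambda>p. F (fst p) (snd p)) has_derivative
                    (\<lambda>h. Fs s t * fst h + Ft s t * snd h)) (at (s, t))"
    and F0: "F 0 0 = 0"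
    and bd: "\<And>s t. (s,t) \<noteq> (0,0) \<Longrightarrow> \<bar>s * Fs s t + t * Ft s t\<bar> \<le> L * (ia * s\<^sup>2 + ib * t\<^sup>2)"
  shows "F s t \<le> L * (ia * s\<^sup>2 + ib * t\<^sup>2) / 2"
proof (cases "(s,t) = (0,0)")
  case True then show ?thesis using F0 by simp
next
  case nz: False
  define q where "q = ia * s\<^sup>2 + ib * t\<^sup>2"
  define h where "h = (\<lambda>u::real. F (u * s) (u * t) - L * u * u * q / 2)"
  have d1: "((\<lambda>r. F (r* s) (r*t)) has_real_derivative (Fs (r* s) (r*t) * s + Ft (r* s) (r*t) * t)) (at r)"
    for r
  proof -
    have g: "((\<lambda>r. (r* s, r*t)) has_derivative (\<lambda>h. (h* s, h*t))) (at r)"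
      by (auto intro!: derivative_eq_intros)
    have "(((\<lambda>p. F (fst p) (snd p)) \<circ> (\<lambda>r. (r* s, r*t))) has_derivative
       ((\<lambda>h. Fs (r* s) (r*t) * fst h + Ft (r* s) (r*t) * snd h) \<circ> (\<lambda>h. (h* s, h*t)))) (at r)"
      using diff_chain_at[OF g F_deriv[of "r* s" "r*t"]] by simp
    then show ?thesis unfolding has_field_derivative_def o_def fst_conv snd_conv
      by (rule has_derivative_eq_rhs) (simp add: fun_eq_iff algebra_simps)
  qed
  have dh: "(h has_real_derivative (Fs (r* s) (r*t) * s + Ft (r* s) (r*t) * t - L * r * q)) (at r)" for r
  proof -
    have "((\<lambda>u. L * u * u * q / 2) has_real_derivative L * r * q) (at r)"
      by (auto intro!: derivative_eq_intros simp: algebra_simps)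
    then show ?thesis unfolding h_def by (rule DERIV_diff[OF d1])
  qed
  have "h 1 \<le> h 0"
  proof (rule DERIV_nonpos_imp_decreasing_open[of 0 1 h])
    show "continuous_on {0..1} h" by (rule has_real_derivative_imp_continuous_on) (rule dh)
    fix r :: real assume r: "0 < r" "r < 1"
    have "(r* s, r*t) \<noteq> (0,0)" using nz r by auto
    then have "\<bar>(r* s) * Fs (r* s) (r*t) + (r*t) * Ft (r* s) (r*t)\<bar> \<le> L * (ia * (r* s)\<^sup>2 + ib * (r*t)\<^sup>2)"
      by (rule bd)
    then have "r * (Fs (r* s) (r*t) * s + Ft (r* s) (r*t) * t) \<le> r * (L * r * q)"
      unfolding q_def by (simp add: power2_eq_square algebra_simps)
    then have "Fs (r* s) (r*t) * s + Ft (r* s) (r*t) * t - L * r * q \<le> 0"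
      using r(1) by (simp add: mult_le_cancel_left_pos)
    then show "\<exists>y. (h has_real_derivative y) (at r) \<and> y \<le> 0" using dh by blast
  qed simp
  then show ?thesis unfolding h_def q_def using F0 by simp
qed

lemma qpos:
  fixes ia ib s t :: real
  assumes "(s,t) \<noteq> (0,0)" "ia > 0" "ib > 0"
  shows "ia * s\<^sup>2 + ib * t\<^sup>2 > 0"
proof (cases "s = 0")
  case True
  then have "t \<noteq> 0" using assms(1) by simp
  then show ?thesis using True assms by simp
next
  case False
  then have "ia * s\<^sup>2 > 0" using assms by simp
  moreover have "ib * t\<^sup>2 \<ge> 0" using assms by simp
  ultimately show ?thesis by linarith
qed

lemma quad_bound:
  fixes s t x y K M ia ib :: real
  assumes "\<bar>x\<bar> \<le> K1 * (\<bar>s\<bar> + \<bar>t\<bar>)" "\<bar>y\<bar> \<le> K2 * (\<bar>s\<bar> + \<bar>t\<bar>)" "K1 \<ge> 0" "K2 \<ge> 0"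
    and "M * ia \<ge> 1" "M * ib \<ge> 1" "ia > 0" "ib > 0"
  shows "\<bar>s * x + t * y\<bar> \<le> (2 * (K1 + K2) * M) * (ia * s\<^sup>2 + ib * t\<^sup>2)"
proof -
  let ?n = "\<bar>s\<bar> + \<bar>t\<bar>"
  have "\<bar>s * x + t * y\<bar> \<le> \<bar>s\<bar> * \<bar>x\<bar> + \<bar>t\<bar> * \<bar>y\<bar>" by (simp add: abs_mult abs_triangle_ineq[THEN order_trans])
  also have "\<dots> \<le> \<bar>s\<bar> * (K1 * ?n) + \<bar>t\<bar> * (K2 * ?n)"
    by (intro add_mono mult_left_mono assms(1,2)) simp_all
  also have "\<dots> \<le> (K1 + K2) * (?n * ?n)"
  proof -
    have "\<bar>s\<bar> \<le> ?n" "\<bar>t\<bar> \<le> ?n" by simp_all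
    then have "\<bar>s\<bar> * (K1 * ?n) \<le> ?n * (K1 * ?n)" "\<bar>t\<bar> * (K2 * ?n) \<le> ?n * (K2 * ?n)"
      using assms(3,4) by (intro mult_right_mono; simp)+
    then show ?thesis by (simp add: algebra_simps)
  qed
  also have "\<dots> \<le> (K1 + K2) * (2 * (s\<^sup>2 + t\<^sup>2))"
  proof (rule mult_left_mono)
    have "0 \<le> (\<bar>s\<bar> - \<bar>t\<bar>)\<^sup>2" by simp
    then show "?n * ?n \<le> 2 * (s\<^sup>2 + t\<^sup>2)" by (simp add: power2_eq_square algebra_simps)
  qed (use assms in simp)
  also have "\<dots> \<le> (K1 + K2) * (2 * (M * (ia * s\<^sup>2 + ib * t\<^sup>2)))"
  proof (rule mult_left_mono)
    have "s\<^sup>2 \<le> (M * ia) * s\<^sup>2" using assms(5) by (simp add: mult_le_cancel_right1)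
    moreover have "t\<^sup>2 \<le> (M * ib) * t\<^sup>2" using assms(6) by (simp add: mult_le_cancel_right1)
    ultimately show "2 * (s\<^sup>2 + t\<^sup>2) \<le> 2 * (M * (ia * s\<^sup>2 + ib * t\<^sup>2))" by (simp add: algebra_simps)
  qed (use assms in simp)
  finally show ?thesis by (simp add: algebra_simps)
qed

theorem proposition2p2:
  fixes \<Omega> :: "'a::euclidean_space set"
    and a b c :: "'a \<Rightarrow> real"
    and F Fs Ft :: "real \<Rightarrow> real \<Rightarrow> real"
  assumes "open \<Omega>" and "bounded \<Omega>" and "\<Omega> \<noteq> {}"
    and "in_Linf \<Omega> a" and "in_Linf \<Omega> b" and "in_Linf \<Omega> c"
    and "essinf_on \<Omega> a > 0" and "essinf_on \<Omega> b > 0" and "essinf_on \<Omega> c > 0"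
    and F_deriv: "\<And>s t. ((\<lambda>p. F (fst p) (snd p)) has_derivative
                    (\<lambda>h. Fs s t * fst h + Ft s t * snd h)) (at (s, t))"
    and "continuous_on UNIV (\<lambda>p. Fs (fst p) (snd p))"
    and "continuous_on UNIV (\<lambda>p. Ft (fst p) (snd p))"
    and F_nonneg: "\<And>s t. F s t \<ge> 0" and "F 0 0 = 0" and "\<exists>s t. F s t \<noteq> 0"
    and "((\<lambda>p. Fs (fst p) (snd p) / (\<bar>fst p\<bar> + \<bar>snd p\<bar>)) \<longlongrightarrow> 0) (at (0, 0))"
    and "((\<lambda>p. Ft (fst p) (snd p) / (\<bar>fst p\<bar> + \<bar>snd p\<bar>)) \<longlongrightarrow> 0) (at (0, 0))"
    and "((\<lambda>p. Fs (fst p) (snd p) / (\<bar>fst p\<bar> + \<bar>snd p\<bar>)) \<longlongrightarrow> 0)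
           (filtercomap (\<lambda>p. \<bar>fst p\<bar> + \<bar>snd p\<bar>) at_top)"
    and "((\<lambda>p. Ft (fst p) (snd p) / (\<bar>fst p\<bar> + \<bar>snd p\<bar>)) \<longlongrightarrow> 0)
           (filtercomap (\<lambda>p. \<bar>fst p\<bar> + \<bar>snd p\<bar>) at_top)"
  shows "sF \<Omega> a b c F < \<infinity> \<and> sF \<Omega> a b c F > 0 \<and>
         SF \<Omega> a b c Fs Ft < \<infinity> \<and> SF \<Omega> a b c Fs Ft > 0 \<and>
         SF \<Omega> a b c Fs Ft \<ge> sF \<Omega> a b c F"
proof -
  note a1 = assms(1,2,3)
  define A where "A = L1_norm \<Omega> a"
  define B where "B = L1_norm \<Omega> b"
  define C where "C = L1_norm \<Omega> c"
  define \<alpha> where "\<alpha> = Linf_norm \<Omega> (\<lambda>x. c x / a x)"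
  define \<beta> where "\<beta> = Linf_norm \<Omega> (\<lambda>x. c x / b x)"
  have Apos: "A > 0" unfolding A_def by (rule L1_pos[OF a1 assms(4,7)])
  have Bpos: "B > 0" unfolding B_def by (rule L1_pos[OF a1 assms(5,8)])
  have Cpos: "C > 0" unfolding C_def by (rule L1_pos[OF a1 assms(6,9)])
  have CA: "C \<le> \<alpha> * A" and apos: "\<alpha> > 0"
    unfolding A_def C_def \<alpha>_def using ratio_bound[OF a1 assms(4,6,7,9)] by simp_all
  have CB: "C \<le> \<beta> * B" and bpos: "\<beta> > 0"
    unfolding B_def C_def \<beta>_def using ratio_bound[OF a1 assms(5,6,8,9)] by simp_all
  define ia where "ia = inverse \<alpha>"
  define ib where "ib = inverse \<beta>"
  have iapos: "ia > 0" and ibpos: "ib > 0" unfolding ia_def ib_def using apos bpos by simp_all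
  define R where "R = (\<lambda>p::real\<times>real. \<bar>fst p * Fs (fst p) (snd p) + snd p * Ft (fst p) (snd p)\<bar> /
        (ia * (fst p)\<^sup>2 + ib * (snd p)\<^sup>2))"
  define T where "T = (\<lambda>p::real\<times>real. F (fst p) (snd p) / (A * (fst p)\<^sup>2 + B * (snd p)\<^sup>2))"
  have SFe: "SF \<Omega> a b c Fs Ft = (SUP p \<in> UNIV - {(0,0)}. ereal (R p))"
    unfolding SF_def R_def ia_def ib_def \<alpha>_def \<beta>_def ..
  have sFe: "sF \<Omega> a b c F = 2 * ereal C * (SUP p \<in> UNIV - {(0,0)}. ereal (T p))"
    unfolding sF_def T_def A_def B_def C_def ..
  obtain K1 where K1: "K1 \<ge> 0" "\<And>p. p \<noteq> (0,0) \<Longrightarrow> \<bar>Fs (fst p) (snd p)\<bar> \<le> K1 * (\<bar>fst p\<bar> + \<bar>snd p\<bar>)"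
    using growth[of "\<lambda>p. Fs (fst p) (snd p)"] assms(11,16,18) by blast
  obtain K2 where K2: "K2 \<ge> 0" "\<And>p. p \<noteq> (0,0) \<Longrightarrow> \<bar>Ft (fst p) (snd p)\<bar> \<le> K2 * (\<bar>fst p\<bar> + \<bar>snd p\<bar>)"
    using growth[of "\<lambda>p. Ft (fst p) (snd p)"] assms(12,17,19) by blast
  define M where "M = max \<alpha> \<beta>"
  have Mia: "M * ia \<ge> 1"
  proof -
    have "\<alpha> * ia \<le> M * ia" using iapos unfolding M_def by (intro mult_right_mono) simp_all
    moreover have "\<alpha> * ia = 1" unfolding ia_def using apos by simp
    ultimately show ?thesis by simp
  qed
  have Mib: "M * ib \<ge> 1"
  proof -
    have "\<beta> * ib \<le> M * ib" using ibpos unfolding M_def by (intro mult_right_mono) simp_all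
    moreover have "\<beta> * ib = 1" unfolding ib_def using bpos by simp
    ultimately show ?thesis by simp
  qed
  define L0 where "L0 = 2 * (K1 + K2) * M"
  have Rle: "R p \<le> L0" if "p \<in> UNIV - {(0,0)}" for p
  proof -
    obtain s t where p: "p = (s,t)" by (cases p)
    have nz: "(s,t) \<noteq> (0,0)" using that p by simp
    have "\<bar>s * Fs s t + t * Ft s t\<bar> \<le> L0 * (ia * s\<^sup>2 + ib * t\<^sup>2)"
      unfolding L0_def
      by (rule quad_bound) (use K1(2)[of "(s,t)"] K2(2)[of "(s,t)"] nz K1(1) K2(1) Mia Mib iapos ibpos in simp_all)
    then show ?thesis unfolding R_def p using qpos[OF nz iapos ibpos] by (simp add: pos_divide_le_eq)
  qed
  have SFfin: "SF \<Omega> a b c Fs Ft \<le> ereal L0"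
    unfolding SFe by (rule SUP_least) (simp add: Rle)
  have R0: "R (1,0) \<ge> 0" unfolding R_def using iapos by simp
  have SFge: "ereal (R (1,0)) \<le> SF \<Omega> a b c Fs Ft" unfolding SFe by (rule SUP_upper) simp
  then obtain L where L: "SF \<Omega> a b c Fs Ft = ereal L" using SFfin R0
    by (cases "SF \<Omega> a b c Fs Ft") auto
  have L0le: "L \<ge> 0" using SFge R0 L by simp
  have RL: "R p \<le> L" if "p \<noteq> (0,0)" for p
  proof -
    have "ereal (R p) \<le> SF \<Omega> a b c Fs Ft" unfolding SFe by (rule SUP_upper) (use that in simp)
    then show ?thesis using L by simp
  qed
  have bdL: "\<bar>s * Fs s t + t * Ft s t\<bar> \<le> L * (ia * s\<^sup>2 + ib * t\<^sup>2)" if "(s,t) \<noteq> (0,0)" for s t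
    using RL[OF that] qpos[OF that iapos ibpos] unfolding R_def by (simp add: pos_divide_le_eq)
  have Fle: "F s t \<le> L * (ia * s\<^sup>2 + ib * t\<^sup>2) / 2" for s t
    by (rule ray[OF F_deriv assms(14) bdL])
  have TL: "T p \<le> L / (2 * C)" if "p \<in> UNIV - {(0,0)}" for p
  proof -
    obtain s t where p: "p = (s,t)" by (cases p)
    have nz: "(s,t) \<noteq> (0,0)" using that p by simp
    have Qpos: "A * s\<^sup>2 + B * t\<^sup>2 > 0" using qpos[OF nz Apos Bpos] .
    have "C * ia \<le> A" unfolding ia_def using CA apos by (simp add: field_simps)
    moreover have "C * ib \<le> B" unfolding ib_def using CB bpos by (simp add: field_simps)
    ultimately have "(C * ia) * s\<^sup>2 + (C * ib) * t\<^sup>2 \<le> A * s\<^sup>2 + B * t\<^sup>2"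
      by (intro add_mono mult_right_mono) simp_all
    then have "C * (ia * s\<^sup>2 + ib * t\<^sup>2) \<le> A * s\<^sup>2 + B * t\<^sup>2"
      by (simp add: algebra_simps)
    then have "L * (C * (ia * s\<^sup>2 + ib * t\<^sup>2)) \<le> L * (A * s\<^sup>2 + B * t\<^sup>2)"
      using L0le by (rule mult_left_mono)
    moreover have "2 * C * F s t \<le> C * (L * (ia * s\<^sup>2 + ib * t\<^sup>2))"
      using Fle[of s t] Cpos by simp
    ultimately have "2 * C * F s t \<le> L * (A * s\<^sup>2 + B * t\<^sup>2)" by (simp add: algebra_simps)
    then show ?thesis unfolding T_def p using Qpos Cpos by (simp add: field_simps)
  qed
  have Sle: "(SUP p \<in> UNIV - {(0,0)}. ereal (T p)) \<le> ereal (L / (2 * C))"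
    by (rule SUP_least) (simp add: TL)
  have "sF \<Omega> a b c F \<le> ereal (2 * C) * ereal (L / (2 * C))"
    unfolding sFe using ereal_mult_left_mono[OF Sle, of "ereal (2 * C)"] Cpos by simp
  also have "\<dots> = SF \<Omega> a b c Fs Ft" using L Cpos by simp
  finally have main: "sF \<Omega> a b c F \<le> SF \<Omega> a b c Fs Ft" .
  obtain s0 t0 where st0: "F s0 t0 \<noteq> 0" using assms(15) by blast
  have nz0: "(s0,t0) \<noteq> (0,0)" using st0 assms(14) by auto
  have Tp: "T (s0,t0) > 0" unfolding T_def using qpos[OF nz0 Apos Bpos] F_nonneg[of s0 t0] st0 by simp
  have "ereal (T (s0,t0)) \<le> (SUP p \<in> UNIV - {(0,0)}. ereal (T p))" by (rule SUP_upper) (use nz0 in simp)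
  then have "ereal (2 * C) * ereal (T (s0,t0)) \<le> ereal (2 * C) * (SUP p \<in> UNIV - {(0,0)}. ereal (T p))"
    by (rule ereal_mult_left_mono) (use Cpos in simp)
  also have "\<dots> = sF \<Omega> a b c F" unfolding sFe by simp
  finally have "ereal (2 * C) * ereal (T (s0,t0)) \<le> sF \<Omega> a b c F" .
  moreover have "ereal (2 * C) * ereal (T (s0,t0)) > 0" using Tp Cpos by simp
  ultimately have sFpos: "sF \<Omega> a b c F > 0" by (rule less_le_trans[rotated])
  have SFpos: "SF \<Omega> a b c Fs Ft > 0" using sFpos main by (rule less_le_trans)
  have SFinf: "SF \<Omega> a b c Fs Ft < \<infinity>" using L by simp
  have sFinf: "sF \<Omega> a b c F < \<infinity>" using main SFinf by (rule le_less_trans)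
  show ?thesis using main sFpos SFpos SFinf sFinf by blast
qed

end
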